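(* Let $X$ be a prelength space and $Y$ a metric space. For any $f\in\mathfrak{C}(X\to Y)$, the function $\mathrm{ap}(f):\mathfrak{C}(X)\to\mathfrak{C}(Y)$ is uniformly continuous with modulus $\lambda\varepsilon.\,\mu_{f(\varepsilon/3)}(\tfrac{\varepsilon}{3})$, where $\mu_{f(\varepsilon/3)}$ is the modulus of the uniformly continuous function $f(\tfrac{\varepsilon}{3}):X\to Y$.
   Context: $\mathbb{Q}^+$ denotes the strictly positive rationals; all $\varepsilon,\delta$ (with indices) range over $\mathbb{Q}^+$. A metric space is a triple $(X,\asymp,B)$ where $\asymp$ is an equivalence relation on $X$ and $B$ assigns to each $\varepsilon\in\mathbb{Q}^+$ a binary relation $B_\varepsilon$ on $X$ respecting $\asymp$, such that: (1) each $B_\varepsilon$ is reflexive; (2) each $B_\varepsilon$ is symmetric; (3) if $B_{\varepsilon_1}(a,b)$ and $B_{\varepsilon_2}(b,c)$ then $B_{\varepsilon_1+\varepsilon_2}(a,c)$; (4) if $B_{\varepsilon+\delta}(a,b)$ for all $\delta$, then $B_\varepsilon(a,b)$; (5) if $B_\varepsilon(a,b)$ for all $\varepsilon$, then $a\asymp b$. A prelength space is a metric space such that for all $a,b,\varepsilon,\delta_1,\delta_2$ with $\varepsilon<\delta_1+\delta_2$ and $B_\varepsilon(a,b)$ there exists $c$ with $B_{\delta_1}(a,c)$ and $B_{\delta_2}(c,b)$. A regular function over a metric space $W$ is a function $x:\mathbb{Q}^+\to W$ such that $B_{\varepsilon_1+\varepsilon_2}(x(\varepsilon_1),x(\varepsilon_2))$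 for all $\varepsilon_1,\varepsilon_2$; $\mathfrak{C}(W)$ is the metric space of regular functions with $x\asymp y$ iff $B_{2\varepsilon}(x(\varepsilon),y(\varepsilon))$ for all $\varepsilon$ and $B'_\varepsilon(x,y)$ iff $B_{\varepsilon+\delta_1+\delta_2}(x(\delta_1),y(\delta_2))$ for all $\delta_1,\delta_2$. A uniformly continuous function $g:X\to Y$ is a pair of a function and a modulus $\mu_g$ with $B^X_{\mu_g(\varepsilon)}(x_1,x_2)\Rightarrow B^Y_\varepsilon(g(x_1),g(x_2))$. $X\to Y$ is the metric space of uniformly continuous functions with $B_\varepsilon(g,h)$ iff $B^Y_\varepsilon(g(a),h(a))$ for all $a$, and $g\asymp h$ iff $g(a)\asymp h(a)$ for all $a$. $\mathrm{map}(g)(x)=\lambda\varepsilon.\,g(x(\mu_g(\varepsilon)))$, and for $f\in\mathfrak{C}(X\to Y)$, $\mathrm{ap}(f)(x)=\lambda\varepsilon.\,\mathrm{map}(f(\tfrac{\varepsilon}{2}))(x)(\tfrac{\varepsilon}{2})$. *)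

theory Defs
  imports Complex_Main
begin

text \<open>A metric space is given by a carrier set S (elements of type 'a), an equivalence
  relation E on S, and a family of ball relations B indexed by rationals; only positive
  rationals are meaningful (all quantifiers over epsilons are restricted to 0 < e).\<close>

definition msp :: "'a set \<Rightarrow> ('a \<Rightarrow> 'a \<Rightarrow> bool) \<Rightarrow> (rat \<Rightarrow> 'a \<Rightarrow> 'a \<Rightarrow> bool) \<Rightarrow> bool" where
  "msp S E B \<longleftrightarrow>
     (\<forall>a\<in>S. E a a) \<and>
     (\<forall>a\<in>S. \<forall>b\<in>S. E a b \<longrightarrow> E b a) \<and>
     (\<forall>a\<in>S. \<forall>b\<in>S. \<forall>c\<in>S. E a b \<longrightarrow> E b c \<longrightarrow> E a c) \<and>
     (\<forall>e>0. \<forall>a\<in>S. \<forall>a'\<in>S. \<forall>b\<in>S. \<forall>b'\<in>S. E a a' \<longrightarrow> E b b' \<longrightarrow> B e a b \<longrightarrow> B e a' b') \<and>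
     (\<forall>e>0. \<forall>a\<in>S. B e a a) \<and>
     (\<forall>e>0. \<forall>a\<in>S. \<forall>b\<in>S. B e a b \<longrightarrow> B e b a) \<and>
     (\<forall>e1>0. \<forall>e2>0. \<forall>a\<in>S. \<forall>b\<in>S. \<forall>c\<in>S. B e1 a b \<longrightarrow> B e2 b c \<longrightarrow> B (e1 + e2) a c) \<and>
     (\<forall>e>0. \<forall>a\<in>S. \<forall>b\<in>S. (\<forall>d>0. B (e + d) a b) \<longrightarrow> B e a b) \<and>
     (\<forall>a\<in>S. \<forall>b\<in>S. (\<forall>e>0. B e a b) \<longrightarrow> E a b)"

definition prelength :: "'a set \<Rightarrow> ('a \<Rightarrow> 'a \<Rightarrow> bool) \<Rightarrow> (rat \<Rightarrow> 'a \<Rightarrow> 'a \<Rightarrow> bool) \<Rightarrow> bool" where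
  "prelength S E B \<longleftrightarrow> msp S E B \<and>
     (\<forall>a\<in>S. \<forall>b\<in>S. \<forall>e>0. \<forall>d1>0. \<forall>d2>0. e < d1 + d2 \<longrightarrow> B e a b \<longrightarrow>
        (\<exists>c\<in>S. B d1 a c \<and> B d2 c b))"

text \<open>Regular functions (completion): carrier, equivalence and balls.\<close>

definition reg :: "'a set \<Rightarrow> (rat \<Rightarrow> 'a \<Rightarrow> 'a \<Rightarrow> bool) \<Rightarrow> (rat \<Rightarrow> 'a) set" where
  "reg S B = {x. (\<forall>e>0. x e \<in> S) \<and> (\<forall>e1>0. \<forall>e2>0. B (e1 + e2) (x e1) (x e2))}"

definition C_eq :: "(rat \<Rightarrow> 'a \<Rightarrow> 'a \<Rightarrow> bool) \<Rightarrow> (rat \<Rightarrow> 'a) \<Rightarrow> (rat \<Rightarrow> 'a) \<Rightarrow> bool" where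
  "C_eq B x y \<longleftrightarrow> (\<forall>e>0. B (2 * e) (x e) (y e))"

definition C_ball :: "(rat \<Rightarrow> 'a \<Rightarrow> 'a \<Rightarrow> bool) \<Rightarrow> rat \<Rightarrow> (rat \<Rightarrow> 'a) \<Rightarrow> (rat \<Rightarrow> 'a) \<Rightarrow> bool" where
  "C_ball B e x y \<longleftrightarrow> (\<forall>d1>0. \<forall>d2>0. B (e + d1 + d2) (x d1) (y d2))"

definition uc :: "'a set \<Rightarrow> (rat \<Rightarrow> 'a \<Rightarrow> 'a \<Rightarrow> bool) \<Rightarrow> 'b set \<Rightarrow> (rat \<Rightarrow> 'b \<Rightarrow> 'b \<Rightarrow> bool)
                  \<Rightarrow> (('a \<Rightarrow> 'b) \<times> (rat \<Rightarrow> rat)) set" where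
  "uc SX BX SY BY = {(g, \<mu>).
      (\<forall>x\<in>SX. g x \<in> SY) \<and> (\<forall>e>0. 0 < \<mu> e) \<and>
      (\<forall>e>0. \<forall>x1\<in>SX. \<forall>x2\<in>SX. BX (\<mu> e) x1 x2 \<longrightarrow> BY e (g x1) (g x2))}"

definition fun_eq :: "'a set \<Rightarrow> ('b \<Rightarrow> 'b \<Rightarrow> bool)
                      \<Rightarrow> ('a \<Rightarrow> 'b) \<times> (rat \<Rightarrow> rat) \<Rightarrow> ('a \<Rightarrow> 'b) \<times> (rat \<Rightarrow> rat) \<Rightarrow> bool" where
  "fun_eq SX EY g h \<longleftrightarrow> (\<forall>a\<in>SX. EY (fst g a) (fst h a))"

definition fun_ball :: "'a set \<Rightarrow> (rat \<Rightarrow> 'b \<Rightarrow> 'b \<Rightarrow> bool)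
                      \<Rightarrow> rat \<Rightarrow> ('a \<Rightarrow> 'b) \<times> (rat \<Rightarrow> rat) \<Rightarrow> ('a \<Rightarrow> 'b) \<times> (rat \<Rightarrow> rat) \<Rightarrow> bool" where
  "fun_ball SX BY e g h \<longleftrightarrow> (\<forall>a\<in>SX. BY e (fst g a) (fst h a))"

definition cmap :: "('a \<Rightarrow> 'b) \<times> (rat \<Rightarrow> rat) \<Rightarrow> (rat \<Rightarrow> 'a) \<Rightarrow> (rat \<Rightarrow> 'b)" where
  "cmap g x = (\<lambda>e. fst g (x (snd g e)))"

definition cap :: "(rat \<Rightarrow> ('a \<Rightarrow> 'b) \<times> (rat \<Rightarrow> rat)) \<Rightarrow> (rat \<Rightarrow> 'a) \<Rightarrow> (rat \<Rightarrow> 'b)" where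
  "cap f x = (\<lambda>e. cmap (f (e / 2)) x (e / 2))"

end

theory Submission
  imports Defs
begin

lemma msp_tri: "msp S E B \<Longrightarrow> e1>0 \<Longrightarrow> e2>0 \<Longrightarrow> a\<in>S \<Longrightarrow> b\<in>S \<Longrightarrow> c\<in>S
  \<Longrightarrow> B e1 a b \<Longrightarrow> B e2 b c \<Longrightarrow> B (e1+e2) a c"
  unfolding msp_def by blast

lemma msp_closed: "msp S E B \<Longrightarrow> e>0 \<Longrightarrow> a\<in>S \<Longrightarrow> b\<in>S \<Longrightarrow> (\<And>d. d>0 \<Longrightarrow> B (e+d) a b) \<Longrightarrow> B e a b"
  unfolding msp_def by blast

lemma msp_mono: assumes "msp S E B" "0<e" "e \<le> e'" "a\<in>S" "b\<in>S" "B e a b" shows "B e' a b"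
proof (cases "e = e'")
  case True then show ?thesis using assms by simp
next
  case False
  then have "e' - e > 0" using assms by simp
  then have "B (e' - e) b b" using assms unfolding msp_def by blast
  then have "B (e + (e' - e)) a b" using msp_tri[OF assms(1) assms(2) \<open>e'-e>0\<close>] assms by blast
  then show ?thesis by simp
qed

lemma pl_split: assumes "prelength S E B" "p>0" "q>0" "t>0" "a\<in>S" "b\<in>S" "B (p+q) a b"
  shows "\<exists>c\<in>S. B p a c \<and> B (q+t) c b"
proof -
  have "p+q < p + (q+t)" using assms by simp
  moreover have "p+q>0" "q+t>0" using assms by auto
  ultimately show ?thesis using assms unfolding prelength_def by blast
qed

lemma uc_slack:
  assumes "prelength SX EqXX BX" "msp SY EqYY BY" "(g,\<mu>) \<in> uc SX BX SY BY"
    "e>0" "\<delta>>0" "s>0" "s < \<mu> \<delta>" "a\<in>SX" "b\<in>SX" "BX (\<mu> e + s) a b"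
  shows "BY (e+\<delta>) (g a) (g b)"
proof -
  have u: "\<forall>x\<in>SX. g x \<in> SY" "\<forall>e>0. 0 < \<mu> e"
    "\<forall>e>0. \<forall>x1\<in>SX. \<forall>x2\<in>SX. BX (\<mu> e) x1 x2 \<longrightarrow> BY e (g x1) (g x2)"
    using assms(3) unfolding uc_def by auto
  have "\<mu> e > 0" "\<mu> \<delta> > 0" using u assms by auto
  have "\<mu> e + s < \<mu> e + \<mu> \<delta>" using assms by simp
  moreover have "\<mu> e + s > 0" using \<open>\<mu> e > 0\<close> assms by simp
  ultimately obtain c where c: "c\<in>SX" "BX (\<mu> e) a c" "BX (\<mu> \<delta>) c b"
    using assms(1,8,9,10) \<open>\<mu> e > 0\<close> \<open>\<mu> \<delta> > 0\<close> unfolding prelength_def by blast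
  have "BY e (g a) (g c)" "BY \<delta> (g c) (g b)" using u c assms by auto
  then show ?thesis using msp_tri[OF assms(2) assms(4,5)] u c assms by blast
qed

theorem theorem27:
  fixes SX :: "'a set" and EqX :: "'a \<Rightarrow> 'a \<Rightarrow> bool" and BX :: "rat \<Rightarrow> 'a \<Rightarrow> 'a \<Rightarrow> bool"
    and SY :: "'b set" and EqY :: "'b \<Rightarrow> 'b \<Rightarrow> bool" and BY :: "rat \<Rightarrow> 'b \<Rightarrow> 'b \<Rightarrow> bool"
    and f :: "rat \<Rightarrow> ('a \<Rightarrow> 'b) \<times> (rat \<Rightarrow> rat)"
  assumes "prelength SX EqX BX"
    and "msp SY EqY BY"
    and "f \<in> reg (uc SX BX SY BY) (fun_ball SX BY)"
  shows "(cap f, \<lambda>e. snd (f (e / 3)) (e / 3)) \<in> uc (reg SX BX) (C_ball BX) (reg SY BY) (C_ball BY)"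
proof -
  define G where "G e = fst (f e)" for e
  define M where "M e = snd (f e)" for e
  have pl: "prelength SX EqX BX" and my: "msp SY EqY BY" using assms by auto
  have mx: "msp SX EqX BX" using pl unfolding prelength_def by auto
  have fuc: "(G e, M e) \<in> uc SX BX SY BY" if "e>0" for e
    using assms(3) that unfolding reg_def G_def M_def by auto
  have GS: "G e a \<in> SY" if "e>0" "a\<in>SX" for e a using fuc[OF that(1)] that unfolding uc_def by auto
  have Mpos: "M e d > 0" if "e>0" "d>0" for e d using fuc[OF that(1)] that unfolding uc_def by auto
  have Gmod: "BY d (G e a) (G e b)" if "e>0" "d>0" "a\<in>SX" "b\<in>SX" "BX (M e d) a b" for e d a b
    using fuc[OF that(1)] that unfolding uc_def by auto
  have fb: "BY (e1+e2) (G e1 a) (G e2 a)" if "e1>0" "e2>0" "a\<in>SX" for e1 e2 a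
    using assms(3) that unfolding reg_def fun_ball_def G_def by auto
  have capeq: "cap f x e = G (e/2) (x (M (e/2) (e/2)))" for x e
    unfolding cap_def cmap_def G_def M_def by simp
  have tri: "BY (e1+e2) a c" if "e1>0" "e2>0" "a\<in>SY" "b\<in>SY" "c\<in>SY" "BY e1 a b" "BY e2 b c" for e1 e2 a b c
    using msp_tri[OF my] that by blast
  have mono: "BY e' a b" if "0<e" "e \<le> e'" "a\<in>SY" "b\<in>SY" "BY e a b" for e e' a b
    using msp_mono[OF my] that by blast
  have regx: "x d \<in> SX" "BX (d1+d2) (x d1) (x d2)" if "x \<in> reg SX BX" "d>0" "d1>0" "d2>0" for x d d1 d2
    using that unfolding reg_def by auto
  have capreg: "cap f x \<in> reg SY BY" if xr: "x \<in> reg SX BX" for x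
  proof -
    have "cap f x e \<in> SY" if "e>0" for e
      unfolding capeq using GS Mpos regx[OF xr] that by simp
    moreover have "BY (e1+e2) (cap f x e1) (cap f x e2)" if "e1>0" "e2>0" for e1 e2
    proof -
      define m1 where "m1 = M (e1/2) (e1/2)"
      define m2 where "m2 = M (e2/2) (e2/2)"
      have h1: "e1/2>0" "e2/2>0" using that by auto
      have m1p: "m1>0" and m2p: "m2>0" using Mpos h1 unfolding m1_def m2_def by auto
      have aS: "x m1 \<in> SX" and bS: "x m2 \<in> SX" using regx[OF xr] m1p m2p by auto
      have ab: "BX (m1+m2) (x m1) (x m2)" using regx[OF xr m1p m1p m2p] by simp
      have "BY (e1+e2) (G (e1/2) (x m1)) (G (e2/2) (x m2))"
      proof (rule msp_closed[OF my])
        show "e1+e2>0" using that by simp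
        show "G (e1/2) (x m1) \<in> SY" "G (e2/2) (x m2) \<in> SY" using GS h1 aS bS by auto
        fix d :: rat assume dp: "d>0"
        define s where "s = M (e2/2) d / 2"
        have sp: "s>0" "s < M (e2/2) d" using Mpos[OF h1(2) dp] unfolding s_def by auto
        obtain c where c: "c\<in>SX" "BX m1 (x m1) c" "BX (m2+s) c (x m2)"
          using pl_split[OF pl m1p m2p sp(1) aS bS ab] by blast
        have y1: "BY (e1/2) (G (e1/2) (x m1)) (G (e1/2) c)"
          using Gmod[OF h1(1) h1(1) aS c(1)] c(2) unfolding m1_def by simp
        have y2: "BY (e1/2+e2/2) (G (e1/2) c) (G (e2/2) c)" using fb h1 c by auto
        have y3: "BY (e2/2+d) (G (e2/2) c) (G (e2/2) (x m2))"
          using uc_slack[OF pl my fuc[OF h1(2)] h1(2) dp sp(1) sp(2) c(1) bS] c(3) unfolding m2_def by simp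
        have "BY (e1/2 + (e1/2+e2/2) + (e2/2+d)) (G (e1/2) (x m1)) (G (e2/2) (x m2))"
          by (rule tri[OF _ _ _ _ _ tri[OF _ _ _ _ _ y1 y2] y3]) (use h1 dp GS aS bS c(1) in auto)
        moreover have "e1/2 + (e1/2+e2/2) + (e2/2+d) = e1+e2+d" by (simp add: field_simps)
        ultimately show "BY (e1+e2+d) (G (e1/2) (x m1)) (G (e2/2) (x m2))"
          by metis
      qed
      then show ?thesis unfolding capeq m1_def m2_def .
    qed
    ultimately show ?thesis unfolding reg_def by auto
  qed
  show ?thesis
    unfolding uc_def
  proof (clarsimp, intro conjI allI impI ballI)
    fix x assume "x \<in> reg SX BX" then show "cap f x \<in> reg SY BY" using capreg by simp
  next
    fix e :: rat assume "e>0" then show "0 < snd (f (e/3)) (e/3)" using Mpos unfolding M_def by simp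
  next
    fix e :: rat and x1 x2 assume ep: "e>0" and x1r: "x1 \<in> reg SX BX" and x2r: "x2 \<in> reg SX BX"
      and cb: "C_ball BX (snd (f (e / 3)) (e / 3)) x1 x2"
    define m where "m = M (e/3) (e/3)"
    have e3: "e/3>0" using ep by simp
    have mp: "m>0" using Mpos e3 unfolding m_def by simp
    show "C_ball BY e (cap f x1) (cap f x2)"
      unfolding C_ball_def
    proof (intro allI impI)
      fix d1 d2 :: rat assume d1p: "d1>0" and d2p: "d2>0"
      define n1 where "n1 = M (d1/2) (d1/2)"
      define n2 where "n2 = M (d2/2) (d2/2)"
      have h1: "d1/2>0" "d2/2>0" using d1p d2p by auto
      have n1p: "n1>0" and n2p: "n2>0" using Mpos h1 unfolding n1_def n2_def by auto
      have aS: "x1 n1 \<in> SX" and bS: "x2 n2 \<in> SX" using regx x1r x2r n1p n2p by auto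
      have ab: "BX (m+n1+n2) (x1 n1) (x2 n2)" using cb n1p n2p unfolding C_ball_def m_def M_def by auto
      have "BY (e+d1+d2) (G (d1/2) (x1 n1)) (G (d2/2) (x2 n2))"
      proof (rule msp_closed[OF my])
        show "e+d1+d2>0" using ep d1p d2p by simp
        show "G (d1/2) (x1 n1) \<in> SY" "G (d2/2) (x2 n2) \<in> SY" using GS h1 aS bS by auto
        fix \<delta> :: rat assume dp: "\<delta>>0"
        define s where "s = M (d2/2) \<delta> / 3"
        have sp: "s>0" "s+s < M (d2/2) \<delta>" using Mpos[OF h1(2) dp] unfolding s_def by auto
        have ab': "BX (n1+(m+n2)) (x1 n1) (x2 n2)" using ab by (simp add: add_ac)
        obtain P where P: "P\<in>SX" "BX n1 (x1 n1) P" "BX (m+n2+s) P (x2 n2)"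
          using pl_split[OF pl n1p _ sp(1) aS bS ab'] mp n2p by auto
        have P3: "BX (m+(n2+s)) P (x2 n2)" using P(3) by (simp add: add_ac)
        obtain Q where Q: "Q\<in>SX" "BX m P Q" "BX (n2+s+s) Q (x2 n2)"
          using pl_split[OF pl mp _ sp(1) P(1) bS P3] n2p sp by auto
        have Q3: "BX (n2+(s+s)) Q (x2 n2)" using Q(3) by (simp add: add_ac)
        have y1: "BY (d1/2) (G (d1/2) (x1 n1)) (G (d1/2) P)"
          using Gmod[OF h1(1) h1(1) aS P(1)] P(2) unfolding n1_def by simp
        have y2: "BY (d1/2+e/3) (G (d1/2) P) (G (e/3) P)" using fb h1 e3 P by auto
        have y3: "BY (e/3) (G (e/3) P) (G (e/3) Q)"
          using Gmod[OF e3 e3 P(1) Q(1)] Q(2) unfolding m_def by simp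
        have y4: "BY (e/3+d2/2) (G (e/3) Q) (G (d2/2) Q)" using fb h1 e3 Q by auto
        have y5: "BY (d2/2+\<delta>) (G (d2/2) Q) (G (d2/2) (x2 n2))"
          using uc_slack[OF pl my fuc[OF h1(2)] h1(2) dp _ sp(2) Q(1) bS] Q3 sp(1) unfolding n2_def by simp
        have S: "G (d1/2) P \<in> SY" "G (e/3) P \<in> SY" "G (e/3) Q \<in> SY" "G (d2/2) Q \<in> SY"
          using GS h1 e3 P(1) Q(1) by auto
        have z1: "BY (d1/2 + (d1/2+e/3)) (G (d1/2) (x1 n1)) (G (e/3) P)"
          by (rule tri[OF _ _ _ _ _ y1 y2]) (use h1 e3 GS aS S in auto)
        have z2: "BY (d1/2 + (d1/2+e/3) + e/3) (G (d1/2) (x1 n1)) (G (e/3) Q)"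
          by (rule tri[OF _ _ _ _ _ z1 y3]) (use h1 e3 GS aS S in auto)
        have z3: "BY (d1/2 + (d1/2+e/3) + e/3 + (e/3+d2/2)) (G (d1/2) (x1 n1)) (G (d2/2) Q)"
          by (rule tri[OF _ _ _ _ _ z2 y4]) (use h1 e3 GS aS S in auto)
        have z4: "BY (d1/2 + (d1/2+e/3) + e/3 + (e/3+d2/2) + (d2/2+\<delta>)) (G (d1/2) (x1 n1)) (G (d2/2) (x2 n2))"
          by (rule tri[OF _ _ _ _ _ z3 y5]) (use h1 e3 dp GS aS bS S in auto)
        moreover have "d1/2 + (d1/2+e/3) + e/3 + (e/3+d2/2) + (d2/2+\<delta>) = e+d1+d2+\<delta>"
          by (simp add: field_simps)
        ultimately show "BY (e+d1+d2+\<delta>) (G (d1/2) (x1 n1)) (G (d2/2) (x2 n2))"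
          by metis
      qed
      then show "BY (e + d1 + d2) (cap f x1 d1) (cap f x2 d2)"
        unfolding capeq n1_def n2_def .
    qed
  qed
qed

end
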